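(* Let $(R,\mathfrak m,k)$ be a commutative noetherian local ring with $\mathfrak m^4=0$ and $H_R(-1)=0$. For $a,b\in\mathfrak m\smallsetminus\mathfrak m^2$ the following are equivalent: (1) $a,b$ form an exact pair of zero divisors; (2) $(0:_R a)=bR$; (3) $ab=0$, $a\mathfrak m^2=\mathfrak m^3=b\mathfrak m^2$, and $\mu(a\mathfrak m)=\mu(\mathfrak m)-1=\mu(b\mathfrak m)$.
   Context: For a local ring $(R,\mathfrak m,k)$, the Hilbert series is $H_R(t)=\sum_{n\ge0}\operatorname{rank}_k(\mathfrak m^n/\mathfrak m^{n+1})t^n$. $\mu(N)$ denotes the minimal number of generators of a finitely generated $R$-module $N$. Elements $a,b$ form an exact pair of zero divisors if $a,b$ are nonzero non-units with $(0:_R a)=bR$ and $(0:_R b)=aR$. *)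

theory Defs
  imports Main
begin

definition is_ideal :: "'a::comm_ring_1 set \<Rightarrow> bool" where
  "is_ideal I \<longleftrightarrow> 0 \<in> I \<and> (\<forall>x\<in>I. \<forall>y\<in>I. x + y \<in> I) \<and> (\<forall>r. \<forall>x\<in>I. r * x \<in> I)"

definition ideal_span :: "'a::comm_ring_1 set \<Rightarrow> 'a set" where
  "ideal_span S = {x. \<exists>F r. finite F \<and> F \<subseteq> S \<and> x = (\<Sum>s\<in>F. r s * s)}"

definition maximal_ideal :: "'a::comm_ring_1 set \<Rightarrow> bool" where
  "maximal_ideal M \<longleftrightarrow> is_ideal M \<and> M \<noteq> UNIV \<and>
     (\<forall>J. is_ideal J \<and> M \<subseteq> J \<longrightarrow> J = M \<or> J = UNIV)"

definition noetherian_ring :: "'a::comm_ring_1 itself \<Rightarrow> bool" where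
  "noetherian_ring _ \<longleftrightarrow> (\<forall>I::'a set. is_ideal I \<longrightarrow>
     (\<exists>F. finite F \<and> F \<subseteq> I \<and> I = ideal_span F))"

definition local_ring :: "'a::comm_ring_1 itself \<Rightarrow> bool" where
  "local_ring _ \<longleftrightarrow> (\<exists>!M::'a set. maximal_ideal M)"

definition max_ideal :: "'a::comm_ring_1 set" where
  "max_ideal = (THE M. maximal_ideal M)"

definition ideal_prod :: "'a::comm_ring_1 set \<Rightarrow> 'a set \<Rightarrow> 'a set" where
  "ideal_prod I J = ideal_span {x * y | x y. x \<in> I \<and> y \<in> J}"

fun ideal_pow :: "'a::comm_ring_1 set \<Rightarrow> nat \<Rightarrow> 'a set" where
  "ideal_pow I 0 = UNIV"
| "ideal_pow I (Suc n) = ideal_prod I (ideal_pow I n)"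

definition mu :: "'a::comm_ring_1 set \<Rightarrow> nat" where
  "mu I = (LEAST d. \<exists>F. finite F \<and> card F = d \<and> F \<subseteq> I \<and> ideal_span F = I)"

text \<open>rank_k (m^n / m^(n+1)): least size of a subset of m^n whose images span
  m^n/m^(n+1) over k = R/m (equivalently over R, as m acts trivially).\<close>
definition hilb :: "'a::comm_ring_1 itself \<Rightarrow> nat \<Rightarrow> nat" where
  "hilb _ n = (LEAST d. \<exists>F::'a set. finite F \<and> card F = d \<and> F \<subseteq> ideal_pow max_ideal n \<and>
      ideal_pow max_ideal n \<subseteq> {x + y | x y. x \<in> ideal_span F \<and> y \<in> ideal_pow max_ideal (Suc n)})"

definition annih :: "'a::comm_ring_1 \<Rightarrow> 'a set" where
  "annih a = {x. x * a = 0}"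

definition exact_pair :: "'a::comm_ring_1 \<Rightarrow> 'a \<Rightarrow> bool" where
  "exact_pair a b \<longleftrightarrow> a \<noteq> 0 \<and> b \<noteq> 0 \<and> \<not> a dvd 1 \<and> \<not> b dvd 1 \<and>
     annih a = range ((*) b) \<and> annih b = range ((*) a)"

end

theory Submission
  imports Defs
begin


lemma ideal_0: "is_ideal I \<Longrightarrow> 0 \<in> I"
  by (simp add: is_ideal_def)
lemma ideal_add: "is_ideal I \<Longrightarrow> x \<in> I \<Longrightarrow> y \<in> I \<Longrightarrow> x + y \<in> I"
  by (simp add: is_ideal_def)
lemma ideal_multL: "is_ideal I \<Longrightarrow> x \<in> I \<Longrightarrow> r * x \<in> I"
  by (simp add: is_ideal_def)
lemma ideal_multR: "is_ideal I \<Longrightarrow> x \<in> I \<Longrightarrow> x * r \<in> I"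
  by (metis ideal_multL mult.commute)
lemma ideal_neg: "is_ideal I \<Longrightarrow> x \<in> I \<Longrightarrow> - x \<in> I"
  using ideal_multL[of I x "-1"] by simp
lemma ideal_diff: "is_ideal I \<Longrightarrow> x \<in> I \<Longrightarrow> y \<in> I \<Longrightarrow> x - y \<in> I"
  using ideal_add[of I x "-y"] ideal_neg[of I y] by simp
lemma ideal_sum: assumes "is_ideal I" "finite F" "\<And>s. s \<in> F \<Longrightarrow> f s \<in> I" shows "sum f F \<in> I"
  using assms(2,3) by (induction F rule: finite_induct) (auto simp: ideal_0[OF assms(1)] ideal_add[OF assms(1)])
lemma ideal_UNIV: "is_ideal UNIV" by (simp add: is_ideal_def)
lemma ideal_zero: "is_ideal {0}" by (simp add: is_ideal_def)
lemma ideal_Int: "is_ideal A \<Longrightarrow> is_ideal B \<Longrightarrow> is_ideal (A \<inter> B)"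
  by (simp add: is_ideal_def)
lemma ideal_image: "is_ideal X \<Longrightarrow> is_ideal ((*) a ` X)"
  unfolding is_ideal_def
proof (intro conjI ballI allI)
  assume X: "0 \<in> X \<and> (\<forall>x\<in>X. \<forall>y\<in>X. x + y \<in> X) \<and> (\<forall>r. \<forall>x\<in>X. r * x \<in> X)"
  show "0 \<in> (*) a ` X" using X by (metis image_eqI mult_zero_right)
  fix x y assume "x \<in> (*) a ` X" "y \<in> (*) a ` X"
  then obtain u v where "u \<in> X" "v \<in> X" "x = a * u" "y = a * v" by auto
  then show "x + y \<in> (*) a ` X" using X by (metis distrib_left image_eqI)
next
  fix r x assume X: "0 \<in> X \<and> (\<forall>x\<in>X. \<forall>y\<in>X. x + y \<in> X) \<and> (\<forall>r. \<forall>x\<in>X. r * x \<in> X)"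
    and "x \<in> (*) a ` X"
  then obtain u where "u \<in> X" "x = a * u" by auto
  then show "r * x \<in> (*) a ` X" using X by (metis image_eqI mult.left_commute)
qed
lemma ideal_preimage: "is_ideal K \<Longrightarrow> is_ideal {z. a * z \<in> K}"
  unfolding is_ideal_def by (auto simp: distrib_left mult.left_commute)
lemma ideal_range: "is_ideal (range ((*) x))"
  using ideal_image[OF ideal_UNIV] .
lemma ideal_annih: "is_ideal (annih a)"
  unfolding is_ideal_def annih_def by (auto simp: distrib_right mult.assoc)

lemma span_ideal: "is_ideal (ideal_span S)"
  unfolding is_ideal_def
proof (intro conjI ballI allI)
  show "0 \<in> ideal_span S" unfolding ideal_span_def by (rule CollectI, rule exI[of _ "{}"]) auto
next
  fix x y assume "x \<in> ideal_span S" "y \<in> ideal_span S"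
  then obtain F r G t where F: "finite F" "F \<subseteq> S" "x = (\<Sum>s\<in>F. r s * s)"
    and G: "finite G" "G \<subseteq> S" "y = (\<Sum>s\<in>G. t s * s)"
    unfolding ideal_span_def by blast
  define u where "u s = (if s \<in> F then r s else 0) + (if s \<in> G then t s else 0)" for s
  have pw: "u s * s = (if s \<in> F then r s * s else 0) + (if s \<in> G then t s * s else 0)" for s
    unfolding u_def by (simp add: distrib_right)
  have "(\<Sum>s\<in>F \<union> G. u s * s) = (\<Sum>s\<in>F \<union> G. (if s \<in> F then r s * s else 0)) + (\<Sum>s\<in>F \<union> G. (if s \<in> G then t s * s else 0))"
    unfolding pw by (rule sum.distrib)
  also have "\<dots> = x + y"
    using F G by (simp add: sum.inter_restrict[symmetric] Int_absorb1)
  finally show "x + y \<in> ideal_span S" unfolding ideal_span_def using F G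
    by (intro CollectI exI[of _ "F \<union> G"] exI[of _ u]) auto
next
  fix c x assume "x \<in> ideal_span S"
  then obtain F r where F: "finite F" "F \<subseteq> S" "x = (\<Sum>s\<in>F. r s * s)"
    unfolding ideal_span_def by blast
  have "c * x = (\<Sum>s\<in>F. (c * r s) * s)" using F by (simp add: sum_distrib_left mult.assoc)
  then show "c * x \<in> ideal_span S" unfolding ideal_span_def using F
    by (intro CollectI exI[of _ F] exI[of _ "\<lambda>s. c * r s"]) simp
qed

lemma span_sup: "s \<in> S \<Longrightarrow> s \<in> ideal_span S"
  unfolding ideal_span_def by (intro CollectI exI[of _ "{s}"] exI[of _ "\<lambda>_. 1"]) auto

lemma span_least: "is_ideal I \<Longrightarrow> S \<subseteq> I \<Longrightarrow> ideal_span S \<subseteq> I"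
  unfolding ideal_span_def
  by (auto intro!: ideal_sum ideal_multL)

lemma span_of_ideal: "is_ideal I \<Longrightarrow> ideal_span I = I"
  using span_least[of I I] span_sup[of _ I] by blast

lemma span_mono: "S \<subseteq> T \<Longrightarrow> ideal_span S \<subseteq> ideal_span T"
  by (meson order_trans span_ideal span_least span_sup subsetI)

lemma span_empty: "ideal_span {} = {0}"
  using span_least[OF ideal_zero, of "{}"] ideal_0[OF span_ideal] by blast

lemma span_image: "ideal_span ((*) a ` F) = (*) a ` ideal_span F"
proof
  show "ideal_span ((*) a ` F) \<subseteq> (*) a ` ideal_span F"
    by (intro span_least ideal_image span_ideal) (auto intro: span_sup)
  have "ideal_span F \<subseteq> {z. a * z \<in> ideal_span ((*) a ` F)}"
    by (intro span_least ideal_preimage span_ideal) (auto intro: span_sup)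
  then show "(*) a ` ideal_span F \<subseteq> ideal_span ((*) a ` F)" by auto
qed

definition plusI :: "'a::comm_ring_1 set \<Rightarrow> 'a set \<Rightarrow> 'a set" where
  "plusI A B = {x + y | x y. x \<in> A \<and> y \<in> B}"

lemma plusI_ideal: "is_ideal A \<Longrightarrow> is_ideal B \<Longrightarrow> is_ideal (plusI A B)"
  unfolding is_ideal_def plusI_def
proof (safe, goal_cases)
  case 1 then show ?case by (metis add_0)
next
  case (2 x y x' y') then show ?case by (metis add.assoc add.left_commute)
next
  case (3 r x y) then show ?case by (metis distrib_left)
qed

lemma plusI_left: "is_ideal B \<Longrightarrow> A \<subseteq> plusI A B"
  unfolding plusI_def using ideal_0 by force
lemma plusI_right: "is_ideal A \<Longrightarrow> B \<subseteq> plusI A B"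
  unfolding plusI_def using ideal_0 by force
lemma plusI_least: "is_ideal C \<Longrightarrow> A \<subseteq> C \<Longrightarrow> B \<subseteq> C \<Longrightarrow> plusI A B \<subseteq> C"
  unfolding plusI_def using ideal_add by blast
lemma plusI_comm: "plusI A B = plusI B A"
  unfolding plusI_def by (auto; metis add.commute)
lemma plusI_assoc: "plusI (plusI A B) C = plusI A (plusI B C)"
  unfolding plusI_def by (auto simp: add.assoc) (metis add.assoc)+
lemma plusI_mono: "A \<subseteq> A' \<Longrightarrow> B \<subseteq> B' \<Longrightarrow> plusI A B \<subseteq> plusI A' B'"
  unfolding plusI_def by blast
lemma plusI_absorb: "is_ideal K \<Longrightarrow> is_ideal J \<Longrightarrow> J \<subseteq> K \<Longrightarrow> plusI J K = K"
  using plusI_least[of K J K] plusI_right[of J K] by blast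
lemma plusI_absorb2: "is_ideal K \<Longrightarrow> is_ideal J \<Longrightarrow> J \<subseteq> K \<Longrightarrow> plusI K J = K"
  using plusI_absorb plusI_comm by metis
lemma plusI_zero: "plusI A {0} = A"
  unfolding plusI_def by auto

lemma span_insert: "ideal_span (insert x F) = plusI (ideal_span F) (range ((*) x))"
proof
  show "ideal_span (insert x F) \<subseteq> plusI (ideal_span F) (range ((*) x))"
  proof (rule span_least[OF plusI_ideal[OF span_ideal ideal_range]])
    have "x \<in> range ((*) x)" by (metis mult_1_right rangeI)
    then show "insert x F \<subseteq> plusI (ideal_span F) (range ((*) x))"
      using plusI_left[OF ideal_range, of "ideal_span F" x] plusI_right[OF span_ideal, of "range ((*) x)" F] span_sup
      by blast
  qed
  have "x \<in> ideal_span (insert x F)" by (simp add: span_sup)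
  then have "range ((*) x) \<subseteq> ideal_span (insert x F)"
    using ideal_multR[OF span_ideal] by blast
  then show "plusI (ideal_span F) (range ((*) x)) \<subseteq> ideal_span (insert x F)"
    by (intro plusI_least span_ideal span_mono) auto
qed

lemma prod_ideal: "is_ideal (ideal_prod I J)"
  unfolding ideal_prod_def by (rule span_ideal)
lemma prod_mem: "x \<in> I \<Longrightarrow> y \<in> J \<Longrightarrow> x * y \<in> ideal_prod I J"
  unfolding ideal_prod_def by (rule span_sup) blast
lemma prod_least: "is_ideal K \<Longrightarrow> (\<And>x y. x \<in> I \<Longrightarrow> y \<in> J \<Longrightarrow> x * y \<in> K) \<Longrightarrow> ideal_prod I J \<subseteq> K"
  unfolding ideal_prod_def by (rule span_least) auto
lemma prod_mono: "I \<subseteq> I' \<Longrightarrow> J \<subseteq> J' \<Longrightarrow> ideal_prod I J \<subseteq> ideal_prod I' J'"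
  by (meson prod_ideal prod_least prod_mem subsetD)
lemma prod_sub_right: "is_ideal J \<Longrightarrow> ideal_prod I J \<subseteq> J"
  by (simp add: ideal_multL prod_least)
lemma prod_UNIV: "is_ideal I \<Longrightarrow> ideal_prod I UNIV = I"
proof
  assume I: "is_ideal I"
  then show "ideal_prod I UNIV \<subseteq> I" by (simp add: ideal_multR prod_least)
  show "I \<subseteq> ideal_prod I UNIV" using prod_mem[of _ I 1 UNIV] by auto
qed
lemma prod_image: "is_ideal X \<Longrightarrow> ideal_prod M ((*) a ` X) = (*) a ` ideal_prod M X"
proof
  assume X: "is_ideal X"
  show "ideal_prod M ((*) a ` X) \<subseteq> (*) a ` ideal_prod M X"
  proof (rule prod_least[OF ideal_image[OF prod_ideal]])
    fix x y assume "x \<in> M" "y \<in> (*) a ` X"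
    then obtain u where u: "u \<in> X" "y = a * u" by auto
    then have "x * y = a * (x * u)" by (simp add: mult.left_commute)
    moreover have "x * u \<in> ideal_prod M X" using \<open>x \<in> M\<close> u(1) by (rule prod_mem)
    ultimately show "x * y \<in> (*) a ` ideal_prod M X" by blast
  qed
  have "ideal_prod M X \<subseteq> {z. a * z \<in> ideal_prod M ((*) a ` X)}"
  proof (rule prod_least[OF ideal_preimage[OF prod_ideal]])
    fix x y assume "x \<in> M" "y \<in> X"
    have "a * (x * y) = x * (a * y)" by (simp add: mult.left_commute)
    moreover have "x * (a * y) \<in> ideal_prod M ((*) a ` X)" using \<open>x \<in> M\<close> \<open>y \<in> X\<close> by (intro prod_mem) auto
    ultimately show "x * y \<in> {z. a * z \<in> ideal_prod M ((*) a ` X)}" by (simp only: mem_Collect_eq)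
  qed
  then show "(*) a ` ideal_prod M X \<subseteq> ideal_prod M ((*) a ` X)" by auto
qed
lemma prod_plus: "is_ideal S \<Longrightarrow> is_ideal X \<Longrightarrow> ideal_prod M (plusI S X) \<subseteq> plusI S (ideal_prod M X)"
proof (rule prod_least[OF plusI_ideal[OF _ prod_ideal]])
  fix x y assume S: "is_ideal S" and "x \<in> M" "y \<in> plusI S X"
  then obtain s z where "y = s + z" "s \<in> S" "z \<in> X" unfolding plusI_def by blast
  then have "x * y = x * s + x * z" "x * s \<in> S" "x * z \<in> ideal_prod M X"
    using S \<open>x \<in> M\<close> by (auto simp: distrib_left ideal_multL prod_mem)
  then show "x * y \<in> plusI S (ideal_prod M X)" unfolding plusI_def by blast
qed

lemma pow_ideal: "is_ideal I \<Longrightarrow> is_ideal (ideal_pow I n)"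
  by (cases n) (auto simp: ideal_UNIV prod_ideal)
lemma pow_decr: "ideal_pow I (Suc n) \<subseteq> ideal_pow I n"
proof (induction n)
  case (Suc n)
  then show ?case using prod_mono[OF order_refl Suc] by simp
qed (simp)
lemma pow_1: "is_ideal I \<Longrightarrow> ideal_pow I 1 = I"
  by (simp add: prod_UNIV)
lemma pow_mem: "x \<in> I \<Longrightarrow> x ^ n \<in> ideal_pow I n"
  by (induction n) (auto intro: prod_mem)




section \<open>Chains of ideals\<close>

definition covers :: "'a::comm_ring_1 set \<Rightarrow> 'a set \<Rightarrow> bool" where
  "covers J I \<longleftrightarrow> is_ideal J \<and> is_ideal I \<and> J \<subset> I \<and>
     (\<forall>K. is_ideal K \<and> J \<subseteq> K \<and> K \<subseteq> I \<longrightarrow> K = J \<or> K = I)"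

inductive cov :: "'a::comm_ring_1 set \<Rightarrow> 'a set \<Rightarrow> nat \<Rightarrow> bool" where
  cov0: "is_ideal J \<Longrightarrow> cov J J 0"
| covS: "cov J K n \<Longrightarrow> covers K I \<Longrightarrow> cov J I (Suc n)"

inductive wch :: "'a::comm_ring_1 set \<Rightarrow> 'a set \<Rightarrow> nat \<Rightarrow> bool" where
  wch0: "is_ideal J \<Longrightarrow> wch J J 0"
| wchW: "wch J K n \<Longrightarrow> is_ideal I \<Longrightarrow> K \<subseteq> I \<Longrightarrow> wch J I n"
| wchS: "wch J K n \<Longrightarrow> is_ideal I \<Longrightarrow> K \<subset> I \<Longrightarrow> wch J I (Suc n)"

lemma wch_sub: "wch J I n \<Longrightarrow> J \<subseteq> I \<and> is_ideal J \<and> is_ideal I \<and> (n > 0 \<longrightarrow> J \<noteq> I)"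
  by (induction rule: wch.induct) auto

lemma cov_sub: "cov J I n \<Longrightarrow> J \<subseteq> I \<and> is_ideal J \<and> is_ideal I"
  by (induction rule: cov.induct) (auto simp: covers_def)

lemma cov_wch: "cov J I n \<Longrightarrow> wch J I n"
  by (induction rule: cov.induct) (auto simp: covers_def intro: wch.intros)

lemma wch_trans: "wch K I p \<Longrightarrow> wch J K n \<Longrightarrow> wch J I (n + p)"
  by (induction rule: wch.induct) (auto intro: wch.intros)

lemma cov_trans: "cov K I p \<Longrightarrow> cov J K n \<Longrightarrow> cov J I (n + p)"
  by (induction rule: cov.induct) (auto intro: cov.intros)

lemma covers_cov: "covers J I \<Longrightarrow> cov J I 1"
  using covS[OF cov0] by (auto simp: covers_def)

lemma modular_step:
  assumes K: "is_ideal K" and I: "is_ideal I" and c: "is_ideal c" and KI: "K \<subset> I"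
  shows "K \<inter> c \<subset> I \<inter> c \<or> plusI K c \<subset> plusI I c"
proof (rule ccontr)
  assume "\<not> ?thesis"
  moreover have "K \<inter> c \<subseteq> I \<inter> c" "plusI K c \<subseteq> plusI I c" using KI plusI_mono[of K I c c] by auto
  ultimately have e1: "K \<inter> c = I \<inter> c" and e2: "plusI K c = plusI I c" by auto
  have "I \<subseteq> K"
  proof
    fix x assume x: "x \<in> I"
    then have "x \<in> plusI I c" using plusI_left[OF c] by auto
    then have "x \<in> plusI K c" using e2 by simp
    then obtain k y where k: "k \<in> K" "y \<in> c" "x = k + y" unfolding plusI_def by blast
    then have "y = x - k" by simp
    moreover have "k \<in> I" using k KI by auto
    ultimately have "y \<in> I" using ideal_diff[OF I x] by simp
    then have "y \<in> K" using e1 k by auto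
    then show "x \<in> K" using k ideal_add[OF K] by auto
  qed
  then show False using KI by auto
qed

lemma wch_split:
  assumes "wch J I m" "is_ideal c"
  shows "\<exists>p q. m \<le> p + q \<and> wch (J \<inter> c) (I \<inter> c) p \<and> wch (plusI J c) (plusI I c) q"
  using assms(1)
proof (induction rule: wch.induct)
  case (wch0 J)
  then show ?case using assms(2) by (auto intro!: wch.wch0 ideal_Int plusI_ideal)
next
  case (wchW J K n I)
  then obtain p q where pq: "n \<le> p + q" "wch (J \<inter> c) (K \<inter> c) p" "wch (plusI J c) (plusI K c) q" by blast
  have "wch (J \<inter> c) (I \<inter> c) p" using wch.wchW[OF pq(2)] wchW assms(2) ideal_Int by blast
  moreover have "wch (plusI J c) (plusI I c) q" using wch.wchW[OF pq(3)] wchW assms(2) plusI_ideal plusI_mono by blast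
  ultimately show ?case using pq(1) by blast
next
  case (wchS J K n I)
  then obtain p q where pq: "n \<le> p + q" "wch (J \<inter> c) (K \<inter> c) p" "wch (plusI J c) (plusI K c) q" by blast
  have K: "is_ideal K" using wch_sub[OF wchS(1)] by auto
  have w1: "wch (J \<inter> c) (I \<inter> c) p" using wch.wchW[OF pq(2)] wchS assms(2) ideal_Int by blast
  have w2: "wch (plusI J c) (plusI I c) q" using wch.wchW[OF pq(3)] wchS assms(2) plusI_ideal plusI_mono by blast
  from modular_step[OF K wchS(2) assms(2) wchS(3)]
  show ?case
  proof
    assume "K \<inter> c \<subset> I \<inter> c"
    then have "wch (J \<inter> c) (I \<inter> c) (Suc p)" using wch.wchS[OF pq(2)] wchS assms(2) ideal_Int by blast
    then show ?thesis using w2 pq(1) by (intro exI[of _ "Suc p"] exI[of _ q]) auto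
  next
    assume "plusI K c \<subset> plusI I c"
    then have "wch (plusI J c) (plusI I c) (Suc q)" using wch.wchS[OF pq(3)] wchS assms(2) plusI_ideal by blast
    then show ?thesis using w1 pq(1) by (intro exI[of _ p] exI[of _ "Suc q"]) auto
  qed
qed

lemma cover_wch: "wch J X q \<Longrightarrow> covers J I \<Longrightarrow> X \<subseteq> I \<Longrightarrow> q \<le> 1 \<and> (q = 1 \<longrightarrow> X = I)"
proof (induction rule: wch.induct)
  case (wch0 J)
  then show ?case by auto
next
  case (wchW J K n I')
  then show ?case by auto
next
  case (wchS J K n X)
  note cv = wchS(5) and XI = wchS(6)
  have JK: "J \<subseteq> K" "is_ideal K" using wch_sub[OF wchS(1)] by auto
  have KI: "K \<subseteq> I" using wchS(3) XI by auto
  then have "K = J \<or> K = I" using cv JK unfolding covers_def by blast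
  moreover have "K \<noteq> I" using wchS(3) XI by auto
  ultimately have KJ: "K = J" by auto
  have "n \<le> 1 \<and> (n = 1 \<longrightarrow> K = I)" using wchS(4) cv KI by auto
  then have "n = 0" using \<open>K \<noteq> I\<close> by auto
  moreover have "X = I" using wchS(2,3) XI KJ cv unfolding covers_def by blast
  ultimately show ?case by auto
qed

lemma jordan_dedekind: "cov J I n \<Longrightarrow> wch J I m \<Longrightarrow> m \<le> n"
proof (induction arbitrary: m rule: cov.induct)
  case (cov0 J)
  then show ?case using wch_sub by blast
next
  case (covS J K n I)
  have JK: "J \<subseteq> K" "is_ideal J" "is_ideal K" using cov_sub[OF covS(1)] by auto
  have KI: "K \<subseteq> I" "is_ideal I" using covS(2) by (auto simp: covers_def)
  obtain p q where pq: "m \<le> p + q" "wch (J \<inter> K) (I \<inter> K) p" "wch (plusI J K) (plusI I K) q"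
    using wch_split[OF covS(4) JK(3)] by blast
  have "J \<inter> K = J" "I \<inter> K = K" "plusI J K = K" "plusI I K = I"
    using JK KI plusI_absorb[of K J] plusI_absorb2[of I K] by auto
  then have "wch J K p" "wch K I q" using pq by auto
  then have "p \<le> n" "q \<le> 1" using covS(3) cover_wch[OF _ covS(2)] by auto
  then show ?case using pq(1) by simp
qed

lemma cov_unique: "cov J I n \<Longrightarrow> cov J I n' \<Longrightarrow> n = n'"
  using jordan_dedekind cov_wch le_antisym by blast

lemma cov_zero: "cov J I 0 \<Longrightarrow> J = I"
  by (erule cov.cases) auto

lemma cov_upper:
  assumes N: "cov J I N" and K: "is_ideal K" "J \<subseteq> K" "K \<subseteq> I"
  shows "\<exists>q. cov K I q"
proof -
  have I: "is_ideal I" using cov_sub[OF N] by auto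
  have main: "\<forall>X w. is_ideal X \<and> J \<subseteq> X \<and> X \<subseteq> I \<and> wch J X w \<and> N \<le> w + d \<longrightarrow> (\<exists>q. cov X I q)" for d
  proof (induction d)
    case 0
    show ?case
    proof (intro allI impI)
      fix X w assume H: "is_ideal X \<and> J \<subseteq> X \<and> X \<subseteq> I \<and> wch J X w \<and> N \<le> w + 0"
      show "\<exists>q. cov X I q"
      proof (cases "X = I")
        case True then show ?thesis using cov0[OF I] by auto
      next
        case False
        then have "wch J I (Suc w)" using wchS[of J X w I] H I by auto
        then have "Suc w \<le> N" using jordan_dedekind[OF N] by blast
        then show ?thesis using H by auto
      qed
    qed
  next
    case (Suc d)
    show ?case
    proof (intro allI impI)
      fix X w assume H: "is_ideal X \<and> J \<subseteq> X \<and> X \<subseteq> I \<and> wch J X w \<and> N \<le> w + Suc d"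
      show "\<exists>q. cov X I q"
      proof (cases "X = I")
        case True then show ?thesis using cov0[OF I] by auto
      next
        case False
        have above: "\<exists>q. cov Y I q" if Y: "is_ideal Y" "X \<subset> Y" "Y \<subseteq> I" for Y
        proof -
          have "wch J Y (Suc w)" using wchS[of J X w Y] H Y by auto
          moreover have "N \<le> Suc w + d" "J \<subseteq> Y" using H Y by auto
          ultimately show ?thesis using Suc.IH[rule_format, of Y "Suc w"] Y by blast
        qed
        define S where "S = {q. \<exists>Y. is_ideal Y \<and> X \<subset> Y \<and> Y \<subseteq> I \<and> cov Y I q}"
        have bnd: "q \<le> N" if qS: "q \<in> S" for q
        proof -
          obtain Y where Y: "is_ideal Y" "X \<subset> Y" "Y \<subseteq> I" "cov Y I q" using qS S_def by auto
          have "wch J Y (Suc w)" using wchS[of J X w Y] H Y by auto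
          then have "wch J I (Suc w + q)" by (rule wch_trans[OF cov_wch[OF Y(4)]])
          then have "Suc w + q \<le> N" using jordan_dedekind[OF N] by blast
          then show ?thesis by simp
        qed
        have "0 \<in> S" unfolding S_def using False H I cov0[OF I] by auto
        have finS: "finite S" using bnd by (meson finite_atMost finite_subset atMost_iff subsetI)
        define q0 where "q0 = Max S"
        have "q0 \<in> S" unfolding q0_def using finS \<open>0 \<in> S\<close> Max_in by blast
        then obtain Y0 where Y0: "is_ideal Y0" "X \<subset> Y0" "Y0 \<subseteq> I" "cov Y0 I q0" unfolding S_def by auto
        have "covers X Y0"
          unfolding covers_def
        proof (intro conjI allI impI)
          show "is_ideal X" "is_ideal Y0" "X \<subset> Y0" using H Y0 by auto
          fix Z assume Z: "is_ideal Z \<and> X \<subseteq> Z \<and> Z \<subseteq> Y0"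
          show "Z = X \<or> Z = Y0"
          proof (rule ccontr)
            assume nz: "\<not> (Z = X \<or> Z = Y0)"
            have "X \<subset> Z" "Z \<subseteq> I" using nz Z Y0 by auto
            then obtain q' where q': "cov Z I q'" using above[of Z] Z by blast
            have "wch Z Y0 1" using wchS[OF wch0, of Z Y0] Z Y0 nz by auto
            then have "wch Z I (1 + q0)" by (rule wch_trans[OF cov_wch[OF Y0(4)]])
            then have "1 + q0 \<le> q'" using jordan_dedekind[OF q'] by auto
            moreover have "q' \<in> S" unfolding S_def using Z \<open>X \<subset> Z\<close> \<open>Z \<subseteq> I\<close> q' by blast
            then have "q' \<le> q0" unfolding q0_def using finS by auto
            ultimately show False by auto
          qed
        qed
        then show ?thesis using cov_trans[OF Y0(4) covers_cov] by blast
      qed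
    qed
  qed
  have "wch J K 0" using wchW[OF wch0, of J K] K cov_sub[OF N] by auto
  then show ?thesis using main[of N] K by auto
qed

lemma cov_lower:
  assumes N: "cov J I N" and K: "is_ideal K" "J \<subseteq> K" "K \<subseteq> I"
  shows "\<exists>p. cov J K p"
proof -
  have J: "is_ideal J" using cov_sub[OF N] by auto
  have main: "\<forall>X w. is_ideal X \<and> J \<subseteq> X \<and> X \<subseteq> I \<and> wch X I w \<and> N \<le> w + d \<longrightarrow> (\<exists>p. cov J X p)" for d
  proof (induction d)
    case 0
    show ?case
    proof (intro allI impI)
      fix X w assume H: "is_ideal X \<and> J \<subseteq> X \<and> X \<subseteq> I \<and> wch X I w \<and> N \<le> w + 0"
      show "\<exists>p. cov J X p"
      proof (cases "X = J")
        case True then show ?thesis using cov0[OF J] by auto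
      next
        case False
        have "wch J X 1" using wchS[OF wch0[OF J], of X] H False by auto
        then have "wch J I (1 + w)" using wch_trans[of _ I w] H by blast
        then have "wch J I (Suc w)" by simp
        then have "Suc w \<le> N" using jordan_dedekind[OF N] by blast
        then show ?thesis using H by auto
      qed
    qed
  next
    case (Suc d)
    show ?case
    proof (intro allI impI)
      fix X w assume H: "is_ideal X \<and> J \<subseteq> X \<and> X \<subseteq> I \<and> wch X I w \<and> N \<le> w + Suc d"
      show "\<exists>p. cov J X p"
      proof (cases "X = J")
        case True then show ?thesis using cov0[OF J] by auto
      next
        case False
        have below: "\<exists>p. cov J Y p" if Y: "is_ideal Y" "J \<subseteq> Y" "Y \<subset> X" for Y
        proof -
          have "wch Y X 1" using wchS[OF wch0, of Y X] H Y by auto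
          then have "wch Y I (1 + w)" using wch_trans[of _ I w] H by blast
          then have "wch Y I (Suc w)" by simp
          moreover have "N \<le> Suc w + d" "Y \<subseteq> I" using H Y by auto
          ultimately show ?thesis using Suc.IH[rule_format, of Y "Suc w"] Y by blast
        qed
        define S where "S = {p. \<exists>Y. is_ideal Y \<and> J \<subseteq> Y \<and> Y \<subset> X \<and> cov J Y p}"
        have bnd: "p \<le> N" if qS: "p \<in> S" for p
        proof -
          obtain Y where Y: "is_ideal Y" "J \<subseteq> Y" "Y \<subset> X" "cov J Y p" using qS S_def by auto
          have "wch Y X 1" using wchS[OF wch0, of Y X] H Y by auto
          then have "wch Y I (1 + w)" using wch_trans[of _ I w] H by blast
          then have "wch Y I (Suc w)" by simp
          then have "wch J I (p + Suc w)" by (rule wch_trans[OF _ cov_wch[OF Y(4)]])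
          then have "p + Suc w \<le> N" using jordan_dedekind[OF N] by blast
          then show ?thesis by simp
        qed
        have "0 \<in> S" unfolding S_def using False H J cov0[OF J] by auto
        have finS: "finite S" using bnd by (meson finite_atMost finite_subset atMost_iff subsetI)
        define q0 where "q0 = Max S"
        have "q0 \<in> S" unfolding q0_def using finS \<open>0 \<in> S\<close> Max_in by blast
        then obtain Y0 where Y0: "is_ideal Y0" "J \<subseteq> Y0" "Y0 \<subset> X" "cov J Y0 q0" unfolding S_def by auto
        have "covers Y0 X"
          unfolding covers_def
        proof (intro conjI allI impI)
          show "is_ideal X" "is_ideal Y0" "Y0 \<subset> X" using H Y0 by auto
          fix Z assume Z: "is_ideal Z \<and> Y0 \<subseteq> Z \<and> Z \<subseteq> X"
          show "Z = Y0 \<or> Z = X"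
          proof (rule ccontr)
            assume nz: "\<not> (Z = Y0 \<or> Z = X)"
            have "Z \<subset> X" "J \<subseteq> Z" using nz Z Y0 by auto
            then obtain q' where q': "cov J Z q'" using below[of Z] Z by blast
            have "wch Y0 Z 1" using wchS[OF wch0, of Y0 Z] Z Y0 nz by auto
            then have "wch J Z (q0 + 1)" by (rule wch_trans[OF _ cov_wch[OF Y0(4)]])
            then have "q0 + 1 \<le> q'" using jordan_dedekind[OF q'] by auto
            moreover have "q' \<in> S" unfolding S_def using Z \<open>Z \<subset> X\<close> \<open>J \<subseteq> Z\<close> q' by blast
            then have "q' \<le> q0" unfolding q0_def using finS by auto
            ultimately show False by auto
          qed
        qed
        then show ?thesis using covS[OF Y0(4)] by blast
      qed
    qed
  qed
  have "wch K I 0" using wchW[OF wch0, of K I] K cov_sub[OF N] by auto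
  then show ?thesis using main[of N] K by auto
qed

definition len :: "'a::comm_ring_1 set \<Rightarrow> 'a set \<Rightarrow> nat" where
  "len J I = (THE n. cov J I n)"

lemma len_eq: "cov J I n \<Longrightarrow> len J I = n"
  unfolding len_def using cov_unique by blast




locale LR =
  fixes ty :: "'a::comm_ring_1 itself"
  assumes noeth: "noetherian_ring TYPE('a)"
    and loc: "local_ring TYPE('a)"
    and m4: "ideal_pow (max_ideal :: 'a set) 4 = {0}"
begin

abbreviation mm :: "'a set" where "mm \<equiv> max_ideal"

lemma m_max: "maximal_ideal mm"
proof -
  have "\<exists>!M::'a set. maximal_ideal M" using loc unfolding local_ring_def .
  then show ?thesis unfolding max_ideal_def by (rule theI')
qed

lemma m_ideal: "is_ideal mm" using m_max unfolding maximal_ideal_def by auto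

lemma one_notin_m: "(1::'a) \<notin> mm"
proof
  assume "1 \<in> mm"
  then have "r \<in> mm" for r using ideal_multL[OF m_ideal, of 1 r] by simp
  then show False using m_max unfolding maximal_ideal_def by auto
qed

lemma m_pow_mem: "x \<in> mm \<Longrightarrow> x ^ 4 = 0"
  using pow_mem[of x mm 4] m4 by auto

lemma unit_of_notin: assumes "r \<notin> mm" shows "\<exists>s. s * r = 1"
proof -
  let ?J = "plusI mm (range ((*) r))"
  have J: "is_ideal ?J" by (simp add: ideal_range m_ideal plusI_ideal)
  have "mm \<subseteq> ?J" by (simp add: ideal_range plusI_left)
  moreover have "r \<in> ?J" using plusI_right[OF m_ideal, of "range ((*) r)"] by (metis mult_1_right rangeI subsetD)
  ultimately have "?J = UNIV" using m_max J assms unfolding maximal_ideal_def by blast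
  then have "1 \<in> ?J" by auto
  then obtain x s where xs: "x \<in> mm" "1 = x + r * s" unfolding plusI_def by auto
  have x4: "x ^ 4 = 0" using m_pow_mem[OF xs(1)] .
  have "(1 - x) * (1 + x + x^2 + x^3) = 1 - x^4" by (simp add: algebra_simps power2_eq_square power3_eq_cube power4_eq_xxxx)
  moreover have "r * s = 1 - x" using xs(2) by (simp add: algebra_simps)
  ultimately have "(r * s) * (1 + x + x^2 + x^3) = 1" using x4 by simp
  then show ?thesis by (metis mult.commute mult.left_commute)
qed

lemma unit_notin: "s * r = 1 \<Longrightarrow> r \<notin> mm"
  using ideal_multL[OF m_ideal, of r s] one_notin_m by auto

lemma proper_sub: assumes "is_ideal J" "1 \<notin> J" shows "J \<subseteq> mm"
proof
  fix y assume "y \<in> J"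
  show "y \<in> mm"
  proof (rule ccontr)
    assume "y \<notin> mm"
    then obtain s where "s * y = 1" using unit_of_notin by blast
    then show False using ideal_multL[OF assms(1) \<open>y \<in> J\<close>, of s] assms(2) by simp
  qed
qed

lemma fg: "is_ideal (I::'a set) \<Longrightarrow> \<exists>F. finite F \<and> F \<subseteq> I \<and> I = ideal_span F"
  using noeth unfolding noetherian_ring_def by blast

lemma cover_lemma:
  assumes J: "is_ideal J" and x: "x \<notin> J" and mx: "\<And>r. r \<in> mm \<Longrightarrow> x * r \<in> J"
  shows "covers J (plusI J (range ((*) x)))"
  unfolding covers_def
proof (intro conjI allI impI)
  show "is_ideal J" "is_ideal (plusI J (range ((*) x)))" by (auto intro: J plusI_ideal ideal_range)
  have "x \<in> plusI J (range ((*) x))" using plusI_right[OF J, of "range ((*) x)"] by (metis mult_1_right rangeI subsetD)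
  then show "J \<subset> plusI J (range ((*) x))" using plusI_left[OF ideal_range] x by blast
  fix K assume K: "is_ideal K \<and> J \<subseteq> K \<and> K \<subseteq> plusI J (range ((*) x))"
  show "K = J \<or> K = plusI J (range ((*) x))"
  proof (cases "K = J")
    case False
    then obtain y where y: "y \<in> K" "y \<notin> J" using K by auto
    then obtain j r where jr: "j \<in> J" "y = j + x * r" using K unfolding plusI_def by auto
    have "r \<notin> mm" using mx jr y ideal_add[OF J] by auto
    then obtain s where s: "s * r = 1" using unit_of_notin by auto
    have "s * (y - j) = (s * r) * x" using jr by (simp add: algebra_simps)
    then have "x = s * (y - j)" using s by simp
    then have "x \<in> K" using K y jr ideal_diff ideal_multL by (metis subsetD)
    then have "range ((*) x) \<subseteq> K" using K ideal_multR by blast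
    then have "plusI J (range ((*) x)) \<subseteq> K" using K plusI_least by blast
    then show ?thesis using K by auto
  qed simp
qed

lemma gen_i:
  assumes J: "is_ideal J" and F: "finite F" and mx: "\<And>x r. x \<in> F \<Longrightarrow> r \<in> mm \<Longrightarrow> x * r \<in> J"
  shows "\<exists>n \<le> card F. cov J (plusI J (ideal_span F)) n"
  using F mx
proof (induction F rule: finite_induct)
  case empty
  then show ?case using cov0[OF J] by (auto simp: span_empty plusI_zero)
next
  case (insert x F)
  then obtain n where n: "n \<le> card F" "cov J (plusI J (ideal_span F)) n" by auto
  let ?P = "plusI J (ideal_span F)"
  have P: "is_ideal ?P" by (simp add: J plusI_ideal span_ideal)
  have eq: "plusI J (ideal_span (insert x F)) = plusI ?P (range ((*) x))"
    by (simp add: span_insert plusI_assoc)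
  show ?case
  proof (cases "x \<in> ?P")
    case True
    then have "range ((*) x) \<subseteq> ?P" using P ideal_multR by blast
    then have "plusI ?P (range ((*) x)) = ?P" using plusI_absorb2 P ideal_range by blast
    then have "cov J (plusI J (ideal_span (insert x F))) n" using n eq by simp
    moreover have "n \<le> card (insert x F)" using n insert by simp
    ultimately show ?thesis by blast
  next
    case False
    have "x * r \<in> ?P" if "r \<in> mm" for r using insert.prems that plusI_left[OF span_ideal, of J F] by auto
    then have "covers ?P (plusI ?P (range ((*) x)))" using cover_lemma[OF P False] by auto
    then have "cov J (plusI ?P (range ((*) x))) (Suc n)" using covS[OF n(2)] by auto
    then have "cov J (plusI J (ideal_span (insert x F))) (Suc n)" using eq by simp
    moreover have "Suc n \<le> card (insert x F)" using n insert by simp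
    ultimately show ?thesis by blast
  qed
qed

lemma gen_ii: "cov J c n \<Longrightarrow> \<exists>F. finite F \<and> card F \<le> n \<and> F \<subseteq> c \<and> c \<subseteq> plusI (ideal_span F) J"
proof (induction rule: cov.induct)
  case (cov0 J)
  then show ?case using plusI_right[OF span_ideal, of J "{}"] by (intro exI[of _ "{}"]) auto
next
  case (covS J K n I)
  then obtain F where F: "finite F" "card F \<le> n" "F \<subseteq> K" "K \<subseteq> plusI (ideal_span F) J" by auto
  have KI: "is_ideal K" "is_ideal I" "K \<subset> I" using covS(2) unfolding covers_def by auto
  obtain x where x: "x \<in> I" "x \<notin> K" using KI by auto
  let ?Q = "plusI K (range ((*) x))"
  have Q: "is_ideal ?Q" by (simp add: KI plusI_ideal ideal_range)
  have "K \<subseteq> ?Q" by (simp add: ideal_range plusI_left)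
  moreover have "?Q \<subseteq> I" using KI x ideal_multR by (intro plusI_least) auto
  moreover have "x \<in> ?Q" using plusI_right[OF KI(1), of "range ((*) x)"] by (metis mult_1_right rangeI subsetD)
  ultimately have QI: "?Q = I" using covS(2) Q x unfolding covers_def by blast
  have J: "is_ideal J" using cov_sub[OF covS(1)] by auto
  have "I \<subseteq> plusI (ideal_span (insert x F)) J"
  proof
    fix z assume "z \<in> I"
    then obtain k r where kr: "k \<in> K" "z = k + x * r" using QI unfolding plusI_def by auto
    then obtain s j where sj: "s \<in> ideal_span F" "j \<in> J" "k = s + j" using F(4) unfolding plusI_def by auto
    have "s \<in> ideal_span (insert x F)" using sj span_mono[of F "insert x F"] by auto
    moreover have "x * r \<in> ideal_span (insert x F)" by (simp add: ideal_multR span_ideal span_sup)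
    ultimately have "s + x * r \<in> ideal_span (insert x F)" by (simp add: ideal_add span_ideal)
    moreover have "z = (s + x * r) + j" using kr sj by (simp add: algebra_simps)
    ultimately show "z \<in> plusI (ideal_span (insert x F)) J" using sj unfolding plusI_def by blast
  qed
  moreover have "card (insert x F) \<le> Suc n" using F by (simp add: card_insert_if)
  ultimately show ?case using F x KI by (intro exI[of _ "insert x F"]) auto
qed

lemma least_gen:
  assumes J: "is_ideal J" and N: "is_ideal N" and JN: "J \<subseteq> N"
    and mx: "\<And>x r. x \<in> N \<Longrightarrow> r \<in> mm \<Longrightarrow> x * r \<in> J"
  shows "(LEAST d. \<exists>F. finite F \<and> card F = d \<and> F \<subseteq> N \<and> N \<subseteq> plusI (ideal_span F) J) = len J N
         \<and> cov J N (len J N)"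
proof -
  let ?P = "\<lambda>d. \<exists>F. finite F \<and> card F = d \<and> F \<subseteq> N \<and> N \<subseteq> plusI (ideal_span F) J"
  obtain F where F: "finite F" "F \<subseteq> N" "N = ideal_span F" using fg[OF N] by auto
  have "?P (card F)" using F plusI_left[OF J, of N] by auto
  then have "?P (Least ?P)" by (rule LeastI)
  then obtain F0 where F0: "finite F0" "card F0 = Least ?P" "F0 \<subseteq> N" "N \<subseteq> plusI (ideal_span F0) J" by auto
  obtain n where n: "n \<le> card F0" "cov J (plusI J (ideal_span F0)) n"
    using gen_i[OF J F0(1)] mx F0(3) by blast
  have "plusI J (ideal_span F0) = N"
    using F0 plusI_comm[of J] plusI_least[OF N JN span_least[OF N F0(3)]] by auto
  then have cn: "cov J N n" using n by simp
  obtain G where G: "finite G" "card G \<le> n" "G \<subseteq> N" "N \<subseteq> plusI (ideal_span G) J" using gen_ii[OF cn] by auto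
  have "Least ?P \<le> card G" using G by (intro Least_le) auto
  then have "Least ?P = n" using n G F0 by auto
  then show ?thesis using len_eq[OF cn] cn by auto
qed

fun Pk :: "'a set \<Rightarrow> nat \<Rightarrow> 'a set" where
  "Pk N 0 = N"
| "Pk N (Suc k) = ideal_prod mm (Pk N k)"

lemma Pk_ideal: "is_ideal N \<Longrightarrow> is_ideal (Pk N k)"
  by (cases k) (auto simp: prod_ideal)

lemma Pk_sub: "Pk N k \<subseteq> ideal_pow mm k"
proof (induction k)
  case (Suc k)
  then show ?case using prod_mono[OF order_refl Suc, of mm] by simp
qed simp

lemma nakayama:
  assumes N: "is_ideal N" and S: "is_ideal S" and SN: "S \<subseteq> N"
    and h: "N \<subseteq> plusI S (ideal_prod mm N)"
  shows "N = S"
proof -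
  have step: "Pk N k \<subseteq> plusI S (Pk N (Suc k))" for k
  proof (induction k)
    case 0 then show ?case using h by simp
  next
    case (Suc k)
    have "Pk N (Suc k) \<subseteq> ideal_prod mm (plusI S (Pk N (Suc k)))" using prod_mono[OF order_refl Suc, of mm] by simp
    also have "\<dots> \<subseteq> plusI S (Pk N (Suc (Suc k)))" using prod_plus[OF S Pk_ideal[OF N], of mm "Suc k"] by simp
    finally show ?case .
  qed
  have SS: "plusI S (plusI S X) \<subseteq> plusI S X" if "is_ideal X" for X
    using that by (metis S order_refl plusI_absorb plusI_assoc plusI_ideal)
  have all: "N \<subseteq> plusI S (Pk N k)" for k
  proof (induction k)
    case 0 then show ?case using plusI_right[OF S] by simp
  next
    case (Suc k)
    have "N \<subseteq> plusI S (plusI S (Pk N (Suc k)))" using Suc step[of k] plusI_mono by blast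
    also have "\<dots> \<subseteq> plusI S (Pk N (Suc k))" using SS Pk_ideal[OF N] by blast
    finally show ?case .
  qed
  have "Pk N 4 \<subseteq> {0}" using Pk_sub[of N 4] m4 by simp
  then have "N \<subseteq> plusI S {0}" using all[of 4] plusI_mono by blast
  then show ?thesis using SN plusI_zero by auto
qed

lemma mu_len:
  assumes N: "is_ideal N"
  shows "mu N = len (ideal_prod mm N) N" "cov (ideal_prod mm N) N (len (ideal_prod mm N) N)"
proof -
  let ?J = "ideal_prod mm N"
  have J: "is_ideal ?J" "?J \<subseteq> N" using prod_ideal prod_sub_right[OF N] by auto
  have mx: "x * r \<in> ?J" if "x \<in> N" "r \<in> mm" for x r using prod_mem[OF that(2,1)] by (simp add: mult.commute)
  have eqv: "(finite F \<and> card F = d \<and> F \<subseteq> N \<and> ideal_span F = N) \<longleftrightarrow>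
             (finite F \<and> card F = d \<and> F \<subseteq> N \<and> N \<subseteq> plusI (ideal_span F) ?J)" for F d
  proof
    assume "finite F \<and> card F = d \<and> F \<subseteq> N \<and> ideal_span F = N"
    then show "finite F \<and> card F = d \<and> F \<subseteq> N \<and> N \<subseteq> plusI (ideal_span F) ?J"
      using plusI_left[OF J(1), of N] by auto
  next
    assume H: "finite F \<and> card F = d \<and> F \<subseteq> N \<and> N \<subseteq> plusI (ideal_span F) ?J"
    have "N = ideal_span F" using nakayama[OF N span_ideal span_least[OF N]] H by auto
    then show "finite F \<and> card F = d \<and> F \<subseteq> N \<and> ideal_span F = N" using H by auto
  qed
  have "mu N = (LEAST d. \<exists>F. finite F \<and> card F = d \<and> F \<subseteq> N \<and> N \<subseteq> plusI (ideal_span F) ?J)"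
    unfolding mu_def using eqv by simp
  then show "mu N = len ?J N" "cov ?J N (len ?J N)" using least_gen[OF J(1) N J(2) mx] by auto
qed

lemma hilb_len:
  "hilb TYPE('a) n = len (ideal_pow mm (Suc n)) (ideal_pow mm n)"
  "cov (ideal_pow mm (Suc n)) (ideal_pow mm n) (len (ideal_pow mm (Suc n)) (ideal_pow mm n))"
proof -
  let ?N = "ideal_pow mm n" and ?J = "ideal_pow mm (Suc n)"
  have N: "is_ideal ?N" using pow_ideal[OF m_ideal] .
  have J: "is_ideal ?J" "?J \<subseteq> ?N" using pow_ideal[OF m_ideal, of "Suc n"] pow_decr[of mm n] by auto
  have mx: "x * r \<in> ?J" if "x \<in> ?N" "r \<in> mm" for x r using prod_mem[OF that(2,1)] by (simp add: mult.commute)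
  have "hilb TYPE('a) n = (LEAST d. \<exists>F. finite F \<and> card F = d \<and> F \<subseteq> ?N \<and> ?N \<subseteq> plusI (ideal_span F) ?J)"
    unfolding hilb_def plusI_def ..
  then show "hilb TYPE('a) n = len ?J ?N" "cov ?J ?N (len ?J ?N)" using least_gen[OF J(1) N J(2) mx] by auto
qed

end




lemma mult_covers:
  assumes c: "covers J I" and ann: "annih x \<subseteq> J"
  shows "covers ((*) x ` J) ((*) x ` I)"
proof -
  have J: "is_ideal J" and I: "is_ideal I" and JI: "J \<subset> I"
    and mx: "\<And>K. is_ideal K \<Longrightarrow> J \<subseteq> K \<Longrightarrow> K \<subseteq> I \<Longrightarrow> K = J \<or> K = I"
    using c unfolding covers_def by auto
  have inj: "y \<in> J" if yy: "y \<in> I" "x * y \<in> (*) x ` J" for y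
  proof -
    obtain z where z: "z \<in> J" "x * y = x * z" using yy(2) by auto
    then have "(y - z) * x = 0" by (simp add: algebra_simps)
    then have "y - z \<in> J" using ann unfolding annih_def by auto
    then have "(y - z) + z \<in> J" using z ideal_add[OF J] by blast
    then show ?thesis by simp
  qed
  show ?thesis unfolding covers_def
  proof (intro conjI allI impI)
    show "is_ideal ((*) x ` J)" "is_ideal ((*) x ` I)" using J I ideal_image by auto
    show "(*) x ` J \<subset> (*) x ` I"
    proof
      show "(*) x ` J \<subseteq> (*) x ` I" using JI by auto
      obtain y where "y \<in> I" "y \<notin> J" using JI by auto
      then show "(*) x ` J \<noteq> (*) x ` I" using inj by blast
    qed
    fix K assume K: "is_ideal K \<and> (*) x ` J \<subseteq> K \<and> K \<subseteq> (*) x ` I"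
    let ?K' = "{z. x * z \<in> K} \<inter> I"
    have K': "is_ideal ?K'" using K I ideal_preimage ideal_Int by blast
    have "J \<subseteq> ?K'" using K JI by auto
    then have "?K' = J \<or> ?K' = I" using mx[OF K'] by auto
    moreover have "K = (*) x ` ?K'" using K by auto
    ultimately show "K = (*) x ` J \<or> K = (*) x ` I" by auto
  qed
qed

lemma mult_cov: "cov J I n \<Longrightarrow> annih x \<subseteq> J \<Longrightarrow> cov ((*) x ` J) ((*) x ` I) n"
proof (induction rule: cov.induct)
  case (cov0 J)
  then show ?case using cov.cov0 ideal_image by blast
next
  case (covS J K n I)
  have "annih x \<subseteq> K" using covS cov_sub by blast
  then show ?case using covS mult_covers cov.covS by blast
qed

context LR
begin

abbreviation pw :: "nat \<Rightarrow> 'a set" where "pw n \<equiv> ideal_pow mm n"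

lemma pw0: "pw 0 = UNIV" by simp
lemma pw1: "pw 1 = mm" using pow_1[OF m_ideal] .
lemma pw2: "pw 2 = ideal_prod mm mm"
  using prod_UNIV[OF m_ideal] by (simp add: numeral_2_eq_2)
lemma pw_ideal: "is_ideal (pw n)" using pow_ideal[OF m_ideal] .
lemma pw_Suc: "pw (Suc n) = ideal_prod mm (pw n)" by simp
lemma pw_dec: "pw (Suc n) \<subseteq> pw n" using pow_decr .
lemma pw21: "pw 2 \<subseteq> mm" using pw_dec[of 1] pw1 by (simp add: numeral_2_eq_2)
lemma pw32: "pw 3 \<subseteq> pw 2" using pw_dec[of 2] by (simp add: numeral_3_eq_3 numeral_2_eq_2)


lemma total: "cov ({0}::'a set) UNIV (hilb TYPE('a) 3 + hilb TYPE('a) 2 + hilb TYPE('a) 1 + hilb TYPE('a) 0)"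
proof -
  have c: "cov (pw (Suc n)) (pw n) (hilb TYPE('a) n)" for n using hilb_len(2)[of n] hilb_len(1)[of n] by simp
  have e4: "(4::nat) = Suc 3" and e3: "(3::nat) = Suc 2" and e2: "(2::nat) = Suc 1" and e1: "(1::nat) = Suc 0" by simp_all
  have c3: "cov (pw 4) (pw 3) (hilb TYPE('a) 3)" using c[of 3] by (simp only: e4[symmetric])
  have c2: "cov (pw 3) (pw 2) (hilb TYPE('a) 2)" using c[of 2] by (simp only: e3[symmetric])
  have c1: "cov (pw 2) (pw 1) (hilb TYPE('a) 1)" using c[of 1] by (simp only: e2[symmetric])
  have c0: "cov (pw 1) (pw 0) (hilb TYPE('a) 0)" using c[of 0] by (simp only: e1[symmetric])
  have "cov (pw 4) (pw 0) (hilb TYPE('a) 3 + hilb TYPE('a) 2 + hilb TYPE('a) 1 + hilb TYPE('a) 0)"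
    using cov_trans[OF c0 cov_trans[OF c1 cov_trans[OF c2 c3]]] .
  then show ?thesis using m4 pw0 by simp
qed

lemma all_cov: fixes J I :: "'a set" assumes "is_ideal J" "is_ideal I" "J \<subseteq> I" shows "cov J I (len J I)"
proof -
  obtain p where p: "cov {0} I p" using cov_lower[OF total assms(2)] ideal_0[OF assms(2)] by auto
  obtain q where "cov J I q" using cov_upper[OF p assms(1)] assms ideal_0[OF assms(1)] by auto
  then show ?thesis using len_eq by auto
qed

lemma len_add: fixes J K I :: "'a set" assumes "is_ideal J" "is_ideal K" "is_ideal I" "J \<subseteq> K" "K \<subseteq> I"
  shows "len J I = len J K + len K I"
proof -
  have "cov J I (len J K + len K I)"
    using cov_trans[OF all_cov[of K I] all_cov[of J K]] assms by auto
  then show ?thesis using len_eq by auto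
qed

lemma len_zero: fixes J I :: "'a set" assumes "is_ideal J" "is_ideal I" "J \<subseteq> I" "len J I = 0" shows "J = I"
  using all_cov[OF assms(1-3)] assms(4) cov_zero by auto

lemma ann_len: fixes x :: 'a shows "len (annih x) UNIV = len {0} (range ((*) x))"
proof -
  have "cov (annih x) UNIV (len (annih x) UNIV)" using all_cov ideal_annih ideal_UNIV by blast
  then have "cov ((*) x ` annih x) (range ((*) x)) (len (annih x) UNIV)" using mult_cov by blast
  moreover have "(*) x ` annih x = {0}"
  proof
    show "(*) x ` annih x \<subseteq> {0}" by (auto simp: annih_def mult.commute)
    have "x * 0 \<in> (*) x ` annih x" using ideal_0[OF ideal_annih, of x] by blast
    then show "{0} \<subseteq> (*) x ` annih x" by simp
  qed
  ultimately have "cov {0} (range ((*) x)) (len (annih x) UNIV)" by simp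
  then show ?thesis using len_eq by metis
qed

lemma total_len: fixes x :: 'a shows "len ({0}::'a set) UNIV = len {0} (annih x) + len {0} (range ((*) x))"
proof -
  have "{0} \<subseteq> annih x" using ideal_0[OF ideal_annih, of x] by simp
  from len_add[OF ideal_zero ideal_annih ideal_UNIV this subset_UNIV] show ?thesis using ann_len[of x] by simp
qed

lemma h0: "hilb TYPE('a) 0 = 1"
proof -
  have "covers mm UNIV" using m_max ideal_UNIV unfolding maximal_ideal_def covers_def by blast
  then have "cov (pw 1) (pw 0) 1" using covers_cov pw1 by auto
  then show ?thesis using hilb_len[of 0] len_eq by auto
qed

lemma total_h: "len ({0}::'a set) UNIV = hilb TYPE('a) 3 + hilb TYPE('a) 2 + hilb TYPE('a) 1 + hilb TYPE('a) 0"
  using len_eq[OF total] .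

lemma mu_m: "mu mm = hilb TYPE('a) 1"
  using mu_len[OF m_ideal] hilb_len[of 1] pw1 pw2 by (simp add: numeral_2_eq_2)

lemma h3: "hilb TYPE('a) 3 = len {0} (pw 3)"
  using hilb_len[of 3] m4 by (simp add: numeral_eq_Suc)

lemma lenR:
  assumes x: "x \<in> mm" "x \<notin> pw 2"
  shows "len {0} (range ((*) x)) = 1 + mu ((*) x ` mm) + len {0} ((*) x ` pw 2)"
    and "(*) x ` pw 2 \<subseteq> pw 3"
proof -
  have x0: "x \<noteq> 0" using x ideal_0[OF pw_ideal] by auto
  have "1 \<notin> annih x" using x0 by (simp add: annih_def)
  then have ann: "annih x \<subseteq> mm" using proper_sub ideal_annih by blast
  have "covers mm UNIV" using m_max ideal_UNIV unfolding maximal_ideal_def covers_def by blast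
  then have "cov ((*) x ` mm) (range ((*) x)) 1" using mult_cov[OF covers_cov ann] by blast
  then have l1: "len ((*) x ` mm) (range ((*) x)) = 1" using len_eq by auto
  have pe: "ideal_prod mm ((*) x ` mm) = (*) x ` pw 2" using prod_image[OF m_ideal] pw2 by simp
  have mu: "mu ((*) x ` mm) = len ((*) x ` pw 2) ((*) x ` mm)"
    using mu_len(1)[OF ideal_image[OF m_ideal]] pe by simp
  have i: "is_ideal ((*) x ` pw 2)" "is_ideal ((*) x ` mm)" "is_ideal (range ((*) x))"
    using ideal_image pw_ideal m_ideal ideal_range by auto
  have s: "(*) x ` pw 2 \<subseteq> (*) x ` mm" "(*) x ` mm \<subseteq> range ((*) x)" using pw21 by auto
  have z: "{0} \<subseteq> (*) x ` pw 2" using ideal_0[OF i(1)] by auto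
  show "len {0} (range ((*) x)) = 1 + mu ((*) x ` mm) + len {0} ((*) x ` pw 2)"
    using len_add[OF ideal_zero i(1) i(3) z] len_add[OF i s] l1 mu s by auto
  show "(*) x ` pw 2 \<subseteq> pw 3"
  proof
    fix z assume "z \<in> (*) x ` pw 2"
    then obtain y where y: "y \<in> pw 2" "z = x * y" by auto
    have "x * y \<in> ideal_prod mm (pw 2)" using prod_mem[OF x(1) y(1)] .
    moreover have "ideal_prod mm (pw 2) = pw 3" by (simp add: numeral_3_eq_3 numeral_2_eq_2)
    ultimately show "z \<in> pw 3" using y by simp
  qed
qed

end




context LR
begin

lemma Hs: "len (pw 2) mm = hilb TYPE('a) 1"
  using hilb_len(1)[of 1] pw1 by (simp add: numeral_2_eq_2)

lemma pw2_mem: "r \<in> mm \<Longrightarrow> f \<in> mm \<Longrightarrow> f * r \<in> pw 2"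
  using prod_mem[of f mm r mm] pw2 by simp

lemma plusI_memE: assumes "z \<in> plusI A B" obtains u v where "u \<in> A" "v \<in> B" "z = u + v"
  using assms unfolding plusI_def by blast

lemma bound:
  fixes x y :: 'a
  assumes x: "x \<in> mm" "x \<notin> pw 2" and y: "y \<in> mm" "y \<notin> pw 2" and xy: "x * y = 0"
  shows "mu ((*) x ` mm) + 1 \<le> hilb TYPE('a) 1"
proof -
  let ?B = "plusI (pw 2) (range ((*) y))"
  have Bi: "is_ideal ?B" by (simp add: ideal_range plusI_ideal pw_ideal)
  have "covers (pw 2) ?B"
  proof (rule cover_lemma[OF pw_ideal y(2)])
    fix r assume "r \<in> mm" then show "y * r \<in> pw 2" using pw2_mem[OF _ y(1)] by blast
  qed
  then have l1: "len (pw 2) ?B = 1" using covers_cov len_eq by blast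
  have "range ((*) y) \<subseteq> mm" using ideal_multR[OF m_ideal y(1)] by blast
  then have Bm: "?B \<subseteq> mm" using plusI_least[OF m_ideal pw21] by blast
  have p2B: "pw 2 \<subseteq> ?B" by (simp add: ideal_range plusI_left)
  have "len (pw 2) mm = len (pw 2) ?B + len ?B mm" using len_add[OF pw_ideal Bi m_ideal p2B Bm] .
  then have lB: "len ?B mm + 1 = hilb TYPE('a) 1" using l1 Hs by simp
  obtain F where F: "finite F" "card F \<le> len ?B mm" "F \<subseteq> mm" "mm \<subseteq> plusI (ideal_span F) ?B"
    using gen_ii[OF all_cov[OF Bi m_ideal Bm]] by blast
  let ?J = "(*) x ` pw 2" and ?N = "(*) x ` mm" and ?F' = "(*) x ` F"
  have Ji: "is_ideal ?J" and Ni: "is_ideal ?N" using ideal_image pw_ideal m_ideal by auto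
  have mx: "z * r \<in> ?J" if zr: "z \<in> ?F'" "r \<in> mm" for z r
  proof -
    obtain f where f: "f \<in> F" "z = x * f" using zr(1) by auto
    have "f * r \<in> pw 2" using pw2_mem[OF zr(2)] f F(3) by auto
    moreover have "z * r = x * (f * r)" using f by (simp add: mult.assoc)
    ultimately show ?thesis by (simp add: image_eqI)
  qed
  obtain n where n: "n \<le> card ?F'" "cov ?J (plusI ?J (ideal_span ?F')) n"
    using gen_i[OF Ji finite_imageI[OF F(1)]] mx by blast
  have eqN: "plusI ?J (ideal_span ?F') = ?N"
  proof
    show "plusI ?J (ideal_span ?F') \<subseteq> ?N"
      using F(3) pw21 by (intro plusI_least Ni span_least) auto
    show "?N \<subseteq> plusI ?J (ideal_span ?F')"
    proof
      fix z assume "z \<in> ?N"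
      then obtain w where w: "w \<in> mm" "z = x * w" by auto
      have "w \<in> plusI (ideal_span F) ?B" using F(4) w(1) by (rule subsetD)
      then obtain s q where sq: "s \<in> ideal_span F" "q \<in> ?B" "w = s + q" by (rule plusI_memE)
      from sq(2) obtain p q' where pq: "p \<in> pw 2" "q' \<in> range ((*) y)" "q = p + q'" by (rule plusI_memE)
      from pq(2) obtain r where r: "q' = y * r" by blast
      have "x * q' = 0" using r xy by (simp add: mult.assoc[symmetric])
      then have "z = x * p + x * s" using w sq pq by (simp add: algebra_simps)
      moreover have "x * s \<in> ideal_span ?F'" using sq(1) span_image[of x F] by auto
      moreover have "x * p \<in> ?J" using pq by auto
      ultimately show "z \<in> plusI ?J (ideal_span ?F')" unfolding plusI_def by blast
    qed
  qed
  have pe: "ideal_prod mm ?N = ?J" using prod_image[OF m_ideal] pw2 by simp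
  have "mu ?N = len ?J ?N" using mu_len(1)[OF Ni] pe by simp
  also have "\<dots> = n" using len_eq n(2) eqN by simp
  finally have "mu ?N \<le> card F" using n card_image_le[OF F(1), of "(*) x"] by simp
  then show ?thesis using F(2) lB by simp
qed

lemma lowlen:
  fixes x :: 'a
  assumes x: "x \<in> mm" "x \<notin> pw 2"
  shows "len {0} ((*) x ` pw 2) + len ((*) x ` pw 2) (pw 3) = hilb TYPE('a) 3"
proof -
  have i: "is_ideal ((*) x ` pw 2)" using ideal_image pw_ideal by blast
  have "{0} \<subseteq> (*) x ` pw 2" using ideal_0[OF i] by simp
  then show ?thesis using len_add[OF ideal_zero i pw_ideal _ lenR(2)[OF x]] h3 by simp
qed

lemma main:
  fixes a b :: 'a
  assumes hneg: "(\<Sum>n<4. (-1::int) ^ n * int (hilb TYPE('a) n)) = 0"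
    and a_mem: "a \<in> mm - pw 2" and b_mem: "b \<in> mm - pw 2"
  shows "(exact_pair a b \<longleftrightarrow> annih a = range ((*) b)) \<and>
         (annih a = range ((*) b) \<longleftrightarrow>
            (a * b = 0 \<and>
             (*) a ` pw 2 = pw 3 \<and>
             (*) b ` pw 2 = pw 3 \<and>
             int (mu ((*) a ` mm)) = int (mu mm) - 1 \<and>
             int (mu ((*) b ` mm)) = int (mu mm) - 1))"
proof -
  define H where "H = hilb TYPE('a)"
  have "(\<Sum>n<4. (-1::int) ^ n * int (H n)) = int (H 0) - int (H 1) + int (H 2) - int (H 3)"
    by (simp add: eval_nat_numeral)
  then have hrel: "H 2 + 1 = H 1 + H 3" using hneg h0 unfolding H_def by simp
  have a: "a \<in> mm" "a \<notin> pw 2" and b: "b \<in> mm" "b \<notin> pw 2" using a_mem b_mem by auto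
  have T: "len ({0}::'a set) UNIV = H 3 + H 2 + H 1 + 1" using total_h h0 unfolding H_def by simp
  have muM: "mu mm = H 1" using mu_m H_def by simp
  define LA where "LA = len {0} (range ((*) a))"
  define LB where "LB = len {0} (range ((*) b))"
  have LA: "LA = 1 + mu ((*) a ` mm) + len {0} ((*) a ` pw 2)" using lenR(1)[OF a] LA_def by simp
  have LB: "LB = 1 + mu ((*) b ` mm) + len {0} ((*) b ` pw 2)" using lenR(1)[OF b] LB_def by simp
  have la: "len {0} ((*) a ` pw 2) + len ((*) a ` pw 2) (pw 3) = H 3" using lowlen[OF a] H_def by simp
  have lb: "len {0} ((*) b ` pw 2) + len ((*) b ` pw 2) (pw 3) = H 3" using lowlen[OF b] H_def by simp
  have TA: "len ({0}::'a set) UNIV = len {0} (annih a) + LA" using total_len LA_def by simp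
  have TB: "len ({0}::'a set) UNIV = len {0} (annih b) + LB" using total_len LB_def by simp
  have ia: "is_ideal ((*) a ` pw 2)" and ib: "is_ideal ((*) b ` pw 2)" using ideal_image pw_ideal by auto
  have two_three: "(annih a = range ((*) b)) \<longleftrightarrow>
            (a * b = 0 \<and>
             (*) a ` pw 2 = pw 3 \<and>
             (*) b ` pw 2 = pw 3 \<and>
             int (mu ((*) a ` mm)) = int (mu mm) - 1 \<and>
             int (mu ((*) b ` mm)) = int (mu mm) - 1)"
  proof
    assume A: "annih a = range ((*) b)"
    have "b \<in> range ((*) b)" by (metis mult_1_right rangeI)
    then have "b \<in> annih a" using A by simp
    then have ab: "a * b = 0" by (simp add: annih_def mult.commute)
    have ba: "b * a = 0" using ab by (simp add: mult.commute)
    have "len ({0}::'a set) UNIV = LB + LA" using TA A LB_def by simp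
    moreover have "mu ((*) a ` mm) + 1 \<le> H 1" using bound[OF a b ab] H_def by simp
    moreover have "mu ((*) b ` mm) + 1 \<le> H 1" using bound[OF b a ba] H_def by simp
    ultimately have eqs: "mu ((*) a ` mm) + 1 = H 1" "mu ((*) b ` mm) + 1 = H 1"
      "len ((*) a ` pw 2) (pw 3) = 0" "len ((*) b ` pw 2) (pw 3) = 0"
      using T LA LB la lb hrel by linarith+
    have "(*) a ` pw 2 = pw 3" using len_zero[OF ia pw_ideal lenR(2)[OF a] eqs(3)] .
    moreover have "(*) b ` pw 2 = pw 3" using len_zero[OF ib pw_ideal lenR(2)[OF b] eqs(4)] .
    ultimately show "a * b = 0 \<and> (*) a ` pw 2 = pw 3 \<and> (*) b ` pw 2 = pw 3 \<and>
             int (mu ((*) a ` mm)) = int (mu mm) - 1 \<and> int (mu ((*) b ` mm)) = int (mu mm) - 1"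
      using ab eqs muM by simp
  next
    assume C: "a * b = 0 \<and> (*) a ` pw 2 = pw 3 \<and> (*) b ` pw 2 = pw 3 \<and>
             int (mu ((*) a ` mm)) = int (mu mm) - 1 \<and> int (mu ((*) b ` mm)) = int (mu mm) - 1"
    have l3: "len {0} (pw 3) = H 3" using h3 H_def by simp
    have "LA = H 1 + H 3" using LA C muM l3 by simp
    moreover have "LB = H 1 + H 3" using LB C muM l3 by simp
    ultimately have eqlen: "len {0} (annih a) = LB" using TA T hrel by simp
    have sub: "range ((*) b) \<subseteq> annih a" using C by (auto simp: annih_def mult.commute mult.left_commute)
    have z: "{0} \<subseteq> range ((*) b)" by (metis empty_subsetI insert_subset mult_zero_right rangeI)
    have "len {0} (annih a) = LB + len (range ((*) b)) (annih a)"
      using len_add[OF ideal_zero ideal_range ideal_annih z sub] LB_def by simp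
    then have "len (range ((*) b)) (annih a) = 0" using eqlen by simp
    then show "annih a = range ((*) b)" using len_zero[OF ideal_range ideal_annih sub] by simp
  qed
  have one_two: "exact_pair a b \<longleftrightarrow> annih a = range ((*) b)"
  proof
    assume "exact_pair a b" then show "annih a = range ((*) b)" unfolding exact_pair_def by simp
  next
    assume A: "annih a = range ((*) b)"
    have "b \<in> range ((*) b)" by (metis mult_1_right rangeI)
    then have "b \<in> annih a" using A by simp
    then have ab: "a * b = 0" by (simp add: annih_def mult.commute)
    have nz: "a \<noteq> 0" "b \<noteq> 0" using a b ideal_0[OF pw_ideal, of 2] by auto
    have nu: "\<not> a dvd 1" "\<not> b dvd 1" using a(1) b(1) unit_notin by (metis dvdE mult.commute)+
    have "len {0} (annih b) = LA" using TA TB A LB_def by simp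
    have sub: "range ((*) a) \<subseteq> annih b" using ab by (auto simp: annih_def mult.commute mult.left_commute)
    have z: "{0} \<subseteq> range ((*) a)" by (metis empty_subsetI insert_subset mult_zero_right rangeI)
    have "len {0} (annih b) = LA + len (range ((*) a)) (annih b)"
      using len_add[OF ideal_zero ideal_range ideal_annih z sub] LA_def by simp
    then have "len (range ((*) a)) (annih b) = 0" using \<open>len {0} (annih b) = LA\<close> by simp
    then have "annih b = range ((*) a)" using len_zero[OF ideal_range ideal_annih sub] by simp
    then show "exact_pair a b" unfolding exact_pair_def using A nz nu by simp
  qed
  show ?thesis using one_two two_three by simp
qed

end


theorem proposition2p3:
  fixes a b :: "'a::comm_ring_1"
  assumes noeth: "noetherian_ring TYPE('a)"
    and loc: "local_ring TYPE('a)"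
    and m4: "ideal_pow (max_ideal :: 'a set) 4 = {0}"
    and hilb_neg1: "(\<Sum>n<4. (-1::int) ^ n * int (hilb TYPE('a) n)) = 0"
    and a_mem: "a \<in> max_ideal - ideal_pow max_ideal 2"
    and b_mem: "b \<in> max_ideal - ideal_pow max_ideal 2"
  shows "(exact_pair a b \<longleftrightarrow> annih a = range ((*) b)) \<and>
         (annih a = range ((*) b) \<longleftrightarrow>
            (a * b = 0 \<and>
             (*) a ` ideal_pow max_ideal 2 = ideal_pow max_ideal 3 \<and>
             (*) b ` ideal_pow max_ideal 2 = ideal_pow max_ideal 3 \<and>
             int (mu ((*) a ` max_ideal)) = int (mu (max_ideal :: 'a set)) - 1 \<and>
             int (mu ((*) b ` max_ideal)) = int (mu (max_ideal :: 'a set)) - 1))"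
proof -
  interpret LR "TYPE('a)" using noeth loc m4 by (rule LR.intro)
  show ?thesis using main[OF hilb_neg1 a_mem b_mem] by simp
qed

end
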